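(* If $\Phi\in\bar\nabla_2$, then there exists $\theta\in(0,1)$ such that the function $t\mapsto\Phi(t^\theta)$ belongs to $\bar\nabla_2$.
   Context: $\bar{\mathcal{P}}$ is the set of all increasing (nondecreasing) $\Phi:[0,\infty]\to[0,\infty]$ such that, with $a(\Phi)=\sup\{t\ge0:\Phi(t)=0\}$ and $b(\Phi)=\inf\{t\ge0:\Phi(t)=\infty\}$ ($\sup\emptyset=0$, $\inf\emptyset=\infty$): $0\le a(\Phi)<\infty$, $0<b(\Phi)\le\infty$; $\lim_{t\to0+}\Phi(t)=\Phi(0)=0$; $\Phi$ is left continuous on $[0,b(\Phi))$; if $b(\Phi)=\infty$ then $\lim_{t\to\infty}\Phi(t)=\Phi(\infty)=\infty$; if $b(\Phi)<\infty$ then $\lim_{t\to b(\Phi)-0}\Phi(t)=\Phi(b(\Phi))$. $\bar\nabla_2$ is the set of $\Phi\in\bar{\mathcal{P}}$ for which there is a constant $k>1$ with $\Phi(t)\le\frac1{2k}\Phi(kt)$ for all $t>0$. *)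

theory Defs
  imports "HOL-Analysis.Analysis"
begin

definition a_of :: "(ennreal \<Rightarrow> ennreal) \<Rightarrow> ennreal" where
  "a_of \<Phi> = Sup {t. \<Phi> t = 0}"

definition b_of :: "(ennreal \<Rightarrow> ennreal) \<Rightarrow> ennreal" where
  "b_of \<Phi> = Inf {t. \<Phi> t = \<infinity>}"

definition Pbar :: "(ennreal \<Rightarrow> ennreal) set" where
  "Pbar = {\<Phi>. mono \<Phi>
      \<and> a_of \<Phi> < \<infinity> \<and> 0 < b_of \<Phi>
      \<and> \<Phi> 0 = 0 \<and> (\<Phi> \<longlongrightarrow> 0) (at_right 0)
      \<and> (\<forall>t. 0 < t \<and> t < b_of \<Phi> \<longrightarrow> (\<Phi> \<longlongrightarrow> \<Phi> t) (at_left t))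
      \<and> (b_of \<Phi> = \<infinity> \<longrightarrow> (\<Phi> \<longlongrightarrow> \<infinity>) (at_left \<infinity>) \<and> \<Phi> \<infinity> = \<infinity>)
      \<and> (b_of \<Phi> < \<infinity> \<longrightarrow> (\<Phi> \<longlongrightarrow> \<Phi> (b_of \<Phi>)) (at_left (b_of \<Phi>)))}"

definition Nabla2bar :: "(ennreal \<Rightarrow> ennreal) set" where
  "Nabla2bar = {\<Phi> \<in> Pbar. \<exists>k::real. k > 1 \<and>
      (\<forall>t. t > 0 \<longrightarrow> \<Phi> t \<le> \<Phi> (ennreal k * t) / (2 * ennreal k))}"

definition epowr :: "ennreal \<Rightarrow> real \<Rightarrow> ennreal" where
  "epowr t \<theta> = (if t = \<infinity> then \<infinity> else ennreal (enn2real t powr \<theta>))"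

end

theory Submission imports Defs begin

lemma iso_at_left:
  fixes g :: "ennreal \<Rightarrow> ennreal"
  assumes sm: "strict_mono g" and su: "surj g" and x: "0 < x"
  shows "filterlim g (at_left (g x)) (at_left x)"
proof -
  have gx: "g 0 < g x" using sm x by (simp add: strict_mono_less)
  show ?thesis unfolding filterlim_def le_filter_def eventually_filtermap
  proof (intro allI impI)
    fix P assume "eventually P (at_left (g x))"
    then obtain b where b: "b < g x" "\<forall>y>b. y < g x \<longrightarrow> P y"
      using eventually_at_left[OF gx] by auto
    obtain c where c: "b = g c" using su by (metis surjD)
    have "c < x" using b c sm by (simp add: strict_mono_less)
    moreover have "\<forall>z>c. z < x \<longrightarrow> P (g z)" using b c sm by (simp add: strict_mono_less)
    ultimately show "eventually (\<lambda>z. P (g z)) (at_left x)"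
      using eventually_at_left[OF x] by auto
  qed
qed

lemma iso_at_right0:
  fixes g :: "ennreal \<Rightarrow> ennreal"
  assumes sm: "strict_mono g" and su: "surj g" and g0: "g 0 = 0"
  shows "filterlim g (at_right 0) (at_right 0)"
proof -
  show ?thesis unfolding filterlim_def le_filter_def eventually_filtermap
  proof (intro allI impI)
    fix P assume "eventually P (at_right (0::ennreal))"
    then obtain b where b: "b > 0" "\<forall>y>0. y < b \<longrightarrow> P y"
      using eventually_at_right[of "0::ennreal" 1 P] by auto
    obtain c where c: "b = g c" using su by (metis surjD)
    have "c > 0" using b c sm g0 by (metis strict_mono_less)
    moreover have "\<forall>z>0. z < c \<longrightarrow> P (g z)" using b c sm g0 by (metis strict_mono_less)
    ultimately show "eventually (\<lambda>z. P (g z)) (at_right 0)"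
      using eventually_at_right[of "0::ennreal" 1 "\<lambda>z. P (g z)"] by auto
  qed
qed

lemma iso_Inf:
  fixes g :: "ennreal \<Rightarrow> ennreal"
  assumes sm: "strict_mono g" and su: "surj g"
  shows "g (Inf {t. g t \<in> S}) = Inf S"
proof (rule antisym)
  obtain x where x: "g x = Inf S" using su by (metis surjD)
  have "x \<le> Inf {t. g t \<in> S}"
  proof (rule Inf_greatest)
    fix t assume "t \<in> {t. g t \<in> S}"
    hence "g x \<le> g t" using x by (simp add: Inf_lower)
    thus "x \<le> t" using sm by (simp add: strict_mono_less_eq)
  qed
  thus "Inf S \<le> g (Inf {t. g t \<in> S})" using x sm by (metis strict_mono_less_eq)
  show "g (Inf {t. g t \<in> S}) \<le> Inf S"
  proof (rule Inf_greatest)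
    fix s assume s: "s \<in> S"
    obtain t where t: "s = g t" using su by (metis surjD)
    hence "Inf {t. g t \<in> S} \<le> t" using s by (auto intro: Inf_lower)
    thus "g (Inf {t. g t \<in> S}) \<le> s" using t sm by (simp add: strict_mono_less_eq)
  qed
qed

lemma iso_Pbar:
  fixes g :: "ennreal \<Rightarrow> ennreal"
  assumes sm: "strict_mono g" and su: "surj g" and g0: "g 0 = 0" and gi: "g \<infinity> = \<infinity>"
    and P: "\<Phi> \<in> Pbar"
  shows "(\<lambda>t. \<Phi> (g t)) \<in> Pbar"
proof -
  have mono: "mono \<Phi>" and a: "a_of \<Phi> < \<infinity>" and b: "0 < b_of \<Phi>" and z: "\<Phi> 0 = 0"
    and r0: "(\<Phi> \<longlongrightarrow> 0) (at_right 0)"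
    and lc: "\<And>t. 0 < t \<Longrightarrow> t < b_of \<Phi> \<Longrightarrow> (\<Phi> \<longlongrightarrow> \<Phi> t) (at_left t)"
    and bi: "b_of \<Phi> = \<infinity> \<Longrightarrow> (\<Phi> \<longlongrightarrow> \<infinity>) (at_left \<infinity>) \<and> \<Phi> \<infinity> = \<infinity>"
    and bf: "b_of \<Phi> < \<infinity> \<Longrightarrow> (\<Phi> \<longlongrightarrow> \<Phi> (b_of \<Phi>)) (at_left (b_of \<Phi>))"
    using P unfolding Pbar_def by auto
  define B where "B = b_of (\<lambda>t. \<Phi> (g t))"
  have gB: "g B = b_of \<Phi>" unfolding B_def b_of_def
    using iso_Inf[OF sm su, of "{t. \<Phi> t = \<infinity>}"] by simp
  have lt: "\<And>x y. g x < g y \<longleftrightarrow> x < y" using sm by (simp add: strict_mono_less)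
  have le: "\<And>x y. g x \<le> g y \<longleftrightarrow> x \<le> y" using sm by (simp add: strict_mono_less_eq)
  have "mono (\<lambda>t. \<Phi> (g t))" using mono le by (simp add: mono_def)
  moreover have "a_of (\<lambda>t. \<Phi> (g t)) < \<infinity>"
  proof -
    obtain c where c: "g c = a_of \<Phi>" using su by (metis surjD)
    have "c < \<infinity>" using c a gi lt by metis
    moreover have "a_of (\<lambda>t. \<Phi> (g t)) \<le> c" unfolding a_of_def
    proof (rule Sup_least)
      fix t assume "t \<in> {t. \<Phi> (g t) = 0}"
      hence "g t \<le> a_of \<Phi>" unfolding a_of_def by (auto intro: Sup_upper)
      thus "t \<le> c" using c le by metis
    qed
    ultimately show ?thesis by simp
  qed
  moreover have "0 < B" using gB b g0 lt by metis
  moreover have "(\<lambda>t. \<Phi> (g t)) 0 = 0" using g0 z by simp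
  moreover have "((\<lambda>t. \<Phi> (g t)) \<longlongrightarrow> 0) (at_right 0)"
    using filterlim_compose[OF r0 iso_at_right0[OF sm su g0]] by simp
  moreover have "\<forall>t. 0 < t \<and> t < B \<longrightarrow> ((\<lambda>t. \<Phi> (g t)) \<longlongrightarrow> \<Phi> (g t)) (at_left t)"
  proof (intro allI impI)
    fix t assume t: "0 < t \<and> t < B"
    have "0 < g t" "g t < b_of \<Phi>" using t g0 gB lt by metis+
    from lc[OF this] show "((\<lambda>t. \<Phi> (g t)) \<longlongrightarrow> \<Phi> (g t)) (at_left t)"
      using filterlim_compose[OF _ iso_at_left[OF sm su], of \<Phi>] t by auto
  qed
  moreover have "B = \<infinity> \<longrightarrow> ((\<lambda>t. \<Phi> (g t)) \<longlongrightarrow> \<infinity>) (at_left \<infinity>) \<and> (\<lambda>t. \<Phi> (g t)) \<infinity> = \<infinity>"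
  proof
    assume "B = \<infinity>"
    hence "b_of \<Phi> = \<infinity>" using gB gi by simp
    from bi[OF this] show "((\<lambda>t. \<Phi> (g t)) \<longlongrightarrow> \<infinity>) (at_left \<infinity>) \<and> (\<lambda>t. \<Phi> (g t)) \<infinity> = \<infinity>"
      using filterlim_compose[OF _ iso_at_left[OF sm su], of \<Phi> _ \<infinity>] gi by auto
  qed
  moreover have "B < \<infinity> \<longrightarrow> ((\<lambda>t. \<Phi> (g t)) \<longlongrightarrow> (\<lambda>t. \<Phi> (g t)) B) (at_left B)"
  proof
    assume "B < \<infinity>"
    hence "b_of \<Phi> < \<infinity>" using gB gi lt by metis
    from bf[OF this] show "((\<lambda>t. \<Phi> (g t)) \<longlongrightarrow> (\<lambda>t. \<Phi> (g t)) B) (at_left B)"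
      using filterlim_compose[OF _ iso_at_left[OF sm su], of \<Phi> _ B] gB \<open>0 < B\<close> by auto
  qed
  ultimately show ?thesis unfolding Pbar_def B_def by blast
qed

lemma epowr_strict_mono:
  assumes th: "0 < \<theta>" shows "strict_mono (\<lambda>t. epowr t \<theta>)"
proof (rule strict_monoI)
  fix x y :: ennreal assume xy: "x < y"
  hence xf: "x \<noteq> \<infinity>" by auto
  show "epowr x \<theta> < epowr y \<theta>"
  proof (cases "y = \<infinity>")
    case True thus ?thesis using xf by (simp add: epowr_def)
  next
    case False
    have "enn2real x < enn2real y" using xy False
      by (simp add: enn2real_less_iff top.not_eq_extremum)
    hence "enn2real x powr \<theta> < enn2real y powr \<theta>"
      by (intro powr_less_mono2 th) auto
    thus ?thesis using False xf by (simp add: epowr_def ennreal_less_iff)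
  qed
qed

lemma epowr_surj:
  assumes th: "0 < \<theta>" shows "surj (\<lambda>t. epowr t \<theta>)"
proof -
  have "\<exists>t. s = epowr t \<theta>" for s
  proof (cases "s = \<infinity>")
    case True thus ?thesis by (auto simp: epowr_def)
  next
    case False
    let ?t = "ennreal (enn2real s powr (1/\<theta>))"
    have "epowr ?t \<theta> = ennreal ((enn2real s powr (1/\<theta>)) powr \<theta>)"
      by (simp add: epowr_def)
    also have "\<dots> = s" using th False by (simp add: powr_powr ennreal_enn2real_if)
    finally show ?thesis by metis
  qed
  thus ?thesis by (metis surjI)
qed

lemma epowr_mult:
  assumes th: "0 < \<theta>" and K: "0 < K"
  shows "epowr (ennreal K * t) \<theta> = ennreal (K powr \<theta>) * epowr t \<theta>"
proof (cases "t = \<infinity>")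
  case True
  thus ?thesis using K by (simp add: epowr_def ennreal_mult_top)
next
  case False
  hence "ennreal K * t \<noteq> \<infinity>" by (simp add: ennreal_mult_eq_top_iff)
  moreover have "enn2real (ennreal K * t) = K * enn2real t" using K by (simp add: enn2real_mult)
  ultimately show ?thesis using False K
    by (simp add: epowr_def powr_mult ennreal_mult)
qed

theorem lemma4p5:
  fixes \<Phi> :: "ennreal \<Rightarrow> ennreal"
  assumes "\<Phi> \<in> Nabla2bar"
  shows "\<exists>\<theta>::real. 0 < \<theta> \<and> \<theta> < 1 \<and> (\<lambda>t. \<Phi> (epowr t \<theta>)) \<in> Nabla2bar"
proof -
  have P: "\<Phi> \<in> Pbar" using assms unfolding Nabla2bar_def by auto
  obtain k :: real where k: "k > 1" and cond: "\<And>t. t > 0 \<Longrightarrow> \<Phi> t \<le> \<Phi> (ennreal k * t) / (2 * ennreal k)"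
    using assms unfolding Nabla2bar_def by auto
  define K where "K = 2 * k^2"
  define \<theta> where "\<theta> = ln (k^2) / ln K"
  have lk: "0 < ln (k^2)" using k by simp
  have lK: "ln (k^2) < ln K" using k unfolding K_def by (simp add: ln_mult)
  have th0: "0 < \<theta>" and th1: "\<theta> < 1" unfolding \<theta>_def using lk lK by auto
  have K1: "K > 1" unfolding K_def proof -
    have "k^2 > 1" using k by (simp add: one_less_power)
    thus "2 * k^2 > 1" by linarith
  qed
  have Kth: "K powr \<theta> = k^2"
  proof -
    have "K powr \<theta> = exp (\<theta> * ln K)" using K1 by (simp add: powr_def)
    also have "\<theta> * ln K = ln (k^2)" unfolding \<theta>_def using lK lk by simp
    finally show ?thesis using k by simp
  qed
  let ?g = "\<lambda>t. epowr t \<theta>"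
  have sm: "strict_mono ?g" and su: "surj ?g" using th0 epowr_strict_mono epowr_surj by auto
  have g0: "?g 0 = 0" using th0 by (simp add: epowr_def)
  have gi: "?g \<infinity> = \<infinity>" by (simp add: epowr_def)
  have PP: "(\<lambda>t. \<Phi> (?g t)) \<in> Pbar" using iso_Pbar[OF sm su g0 gi P] .
  have "\<Phi> (?g t) \<le> \<Phi> (?g (ennreal K * t)) / (2 * ennreal K)" if t: "t > 0" for t
  proof -
    have gt: "?g t > 0" using sm t g0 by (metis strict_mono_less)
    have kgt: "ennreal k * ?g t > 0" using gt k by (simp add: ennreal_zero_less_mult_iff)
    have "\<Phi> (?g t) \<le> \<Phi> (ennreal k * ?g t) / (2 * ennreal k)" using cond[OF gt] .
    also have "\<dots> \<le> (\<Phi> (ennreal k * (ennreal k * ?g t)) / (2 * ennreal k)) / (2 * ennreal k)"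
      by (intro divide_right_mono_ennreal cond kgt)
    also have "\<dots> = \<Phi> (ennreal k * (ennreal k * ?g t)) / ((2 * ennreal k) * (2 * ennreal k))"
    proof -
      have c: "2 * ennreal k < top" using ennreal_less_top[of "2*k"] k by (simp add: ennreal_mult)
      show ?thesis unfolding divide_ennreal_def ennreal_inverse_mult[OF c c] by (simp only: mult.assoc)
    qed
    also have "ennreal k * (ennreal k * ?g t) = ?g (ennreal K * t)"
    proof -
      have e: "ennreal (k^2) = ennreal k * ennreal k" using k by (simp add: power2_eq_square ennreal_mult)
      have "?g (ennreal K * t) = ennreal (k^2) * ?g t"
        using epowr_mult[OF th0, of K t] K1 Kth by simp
      thus ?thesis by (simp only: e mult.assoc)
    qed
    also have "(2 * ennreal k) * (2 * ennreal k) = 2 * ennreal K"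
    proof -
      have e: "ennreal K = 2 * (ennreal k * ennreal k)" unfolding K_def using k
        by (simp add: power2_eq_square ennreal_mult)
      show ?thesis by (simp only: e mult_ac)
    qed
    finally show ?thesis .
  qed
  hence "(\<lambda>t. \<Phi> (?g t)) \<in> Nabla2bar" using PP K1 unfolding Nabla2bar_def by auto
  thus ?thesis using th0 th1 by blast
qed

end
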